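(* (i) Let $S$ be a unital nonassociative ring with multiplication $\circ$ which has a field $K$ as a subring and is a free left $K$-vector space of dimension $m$. Suppose that: (1) there is $t\in S$ such that $t^i$, $0\le i<m$, is a basis of $S$ over $K$, where $t^0=1$ and $t^{i+1}=t\circ t^i$; (2) for all $a\in K$, $a\neq0$, there is $a'\in K^\times$ such that $t\circ a=a'\circ t$; (3) for all $a,b,c\in K$, $i+j<m$, $k<m$, we have $[a\circ t^i,b\circ t^j,c\circ t^k]=0$; (4) $t^m=d$ for some $d\in K^\times$; (5) the map $\sigma:K\to K$, $\sigma(a)=a'$ (with $\sigma(0)=0$), has order $m$ and fixed field $F=\{a\in K\mid t\circ a=a\circ t\}$ containing a primitive $m$th root of unity $\omega$, and $K/F$ is a finite cyclic Galois extension. Then $S\cong S_f=(K/F,\sigma,d)$ with $f(t)=t^m-d\in K[t;\sigma]$. (ii) If moreover $S$ is a right division ring, then $f$ is irreducible and $S\cong(K/F,\sigma,d)$ is a nonassociative cyclic extension of $K$ of degree $m$.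
   Context: $[x,y,z]=(x\circ y)\circ z-x\circ(y\circ z)$ is the associator. $K[t;\sigma]$ is the twisted polynomial ring (polynomials $\sum a_it^i$, multiplication determined by $ta=\sigma(a)t$); $(K/F,\sigma,d)=S_f$ is the set of polynomials of degree $<m$ with multiplication $g\circ h=$ remainder of $gh$ on right division by $f=t^m-d$. A nonassociative ring $S\neq0$ is a right division ring if right multiplication $x\mapsto x\circ a$ is bijective for every $a\ne0$. $f$ is irreducible if not a unit and not a product of two non-units. Definition: if $A$ is a nonassociative division algebra and $D\subseteq A$ an associative division subalgebra, $A$ is a nonassociative cyclic extension of $D$ of degree $m$ if $A$ is a free left $D$-module of rank $m$ and $\mathrm{Aut}(A)$ has a cyclic subgroup $G$ of order $m$ with $H|_D=\mathrm{id}_D$ for all $H\in G$. *)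

theory Defs
  imports "HOL-Computational_Algebra.Polynomial"
begin

primrec tpow :: "('a \<Rightarrow> 'a \<Rightarrow> 'a) \<Rightarrow> 'a \<Rightarrow> 'a \<Rightarrow> nat \<Rightarrow> 'a" where
  "tpow mul one t 0 = one"
| "tpow mul one t (Suc i) = mul t (tpow mul one t i)"

definition associator :: "('a::ab_group_add \<Rightarrow> 'a \<Rightarrow> 'a) \<Rightarrow> 'a \<Rightarrow> 'a \<Rightarrow> 'a \<Rightarrow> 'a" where
  "associator mul x y z = mul (mul x y) z - mul x (mul y z)"

definition unital_nonassoc_ring :: "('a::ab_group_add \<Rightarrow> 'a \<Rightarrow> 'a) \<Rightarrow> 'a \<Rightarrow> bool" where
  "unital_nonassoc_ring mul one \<longleftrightarrow>
     (\<forall>x y z. mul (x + y) z = mul x z + mul y z) \<and>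
     (\<forall>x y z. mul x (y + z) = mul x y + mul x z) \<and>
     (\<forall>x. mul one x = x \<and> mul x one = x)"

definition right_division_ring :: "('a::ab_group_add \<Rightarrow> 'a \<Rightarrow> 'a) \<Rightarrow> bool" where
  "right_division_ring mul \<longleftrightarrow>
     (\<exists>x::'a. x \<noteq> 0) \<and> (\<forall>a. a \<noteq> 0 \<longrightarrow> bij (\<lambda>x. mul x a))"

definition galois_group :: "'k::field set \<Rightarrow> ('k \<Rightarrow> 'k) set" where
  "galois_group F = {\<tau>. bij \<tau> \<and> (\<forall>x y. \<tau> (x + y) = \<tau> x + \<tau> y \<and> \<tau> (x * y) = \<tau> x * \<tau> y)
                        \<and> (\<forall>x\<in>F. \<tau> x = x)}"

definition finite_cyclic_galois :: "'k::field set \<Rightarrow> bool" where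
  "finite_cyclic_galois F \<longleftrightarrow>
     (\<exists>B. finite B \<and> (\<forall>x::'k. \<exists>c. (\<forall>b\<in>B. c b \<in> F) \<and> x = (\<Sum>b\<in>B. c b * b))) \<and>
     {x. \<forall>\<tau>\<in>galois_group F. \<tau> x = x} = F \<and>
     (\<exists>g\<in>galois_group F. galois_group F = range (\<lambda>k. g ^^ k))"

text \<open>Multiplication in K[t;sigma]: (a t^i)(b t^j) = a sigma^i(b) t^(i+j).\<close>
definition skew_mult :: "('k::field \<Rightarrow> 'k) \<Rightarrow> 'k poly \<Rightarrow> 'k poly \<Rightarrow> 'k poly" where
  "skew_mult \<sigma> p q =
     (\<Sum>i\<le>degree p. \<Sum>j\<le>degree q. monom (coeff p i * (\<sigma> ^^ i) (coeff q j)) (i + j))"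

definition skew_rmod :: "('k::field \<Rightarrow> 'k) \<Rightarrow> 'k poly \<Rightarrow> 'k poly \<Rightarrow> 'k poly" where
  "skew_rmod \<sigma> g f =
     (THE r. (r = 0 \<or> degree r < degree f) \<and> (\<exists>q. g = skew_mult \<sigma> q f + r))"

definition Sf_carrier :: "'k::field poly \<Rightarrow> 'k poly set" where
  "Sf_carrier f = {g. g = 0 \<or> degree g < degree f}"

definition Sf_mult :: "('k::field \<Rightarrow> 'k) \<Rightarrow> 'k poly \<Rightarrow> 'k poly \<Rightarrow> 'k poly \<Rightarrow> 'k poly" where
  "Sf_mult \<sigma> f g h = skew_rmod \<sigma> (skew_mult \<sigma> g h) f"

definition skew_unit :: "('k::field \<Rightarrow> 'k) \<Rightarrow> 'k poly \<Rightarrow> bool" where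
  "skew_unit \<sigma> p \<longleftrightarrow> (\<exists>q. skew_mult \<sigma> p q = 1 \<and> skew_mult \<sigma> q p = 1)"

definition skew_irreducible :: "('k::field \<Rightarrow> 'k) \<Rightarrow> 'k poly \<Rightarrow> bool" where
  "skew_irreducible \<sigma> f \<longleftrightarrow>
     \<not> skew_unit \<sigma> f \<and>
     (\<forall>g h. f = skew_mult \<sigma> g h \<longrightarrow> skew_unit \<sigma> g \<or> skew_unit \<sigma> h)"

definition nonassoc_aut :: "'b::ab_group_add set \<Rightarrow> ('b \<Rightarrow> 'b \<Rightarrow> 'b) \<Rightarrow> ('b \<Rightarrow> 'b) \<Rightarrow> bool" where
  "nonassoc_aut A mul H \<longleftrightarrow> bij_betw H A A \<and>
     (\<forall>x\<in>A. \<forall>y\<in>A. H (x + y) = H x + H y \<and> H (mul x y) = mul (H x) (H y)) \<and>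
     (\<forall>x. x \<notin> A \<longrightarrow> H x = x)"

definition nonassoc_cyclic_ext ::
  "'b::ab_group_add set \<Rightarrow> ('b \<Rightarrow> 'b \<Rightarrow> 'b) \<Rightarrow> 'b \<Rightarrow> 'b set \<Rightarrow> nat \<Rightarrow> bool" where
  "nonassoc_cyclic_ext A mul one D m \<longleftrightarrow>
     \<comment> \<open>A is a nonassociative division algebra\<close>
     (\<exists>x\<in>A. x \<noteq> 0) \<and> one \<in> A \<and>
     (\<forall>a\<in>A. a \<noteq> 0 \<longrightarrow> bij_betw (\<lambda>x. mul a x) A A \<and> bij_betw (\<lambda>x. mul x a) A A) \<and>
     \<comment> \<open>D is an associative division subalgebra\<close>
     D \<subseteq> A \<and> 0 \<in> D \<and> one \<in> D \<and>
     (\<forall>x\<in>D. \<forall>y\<in>D. x + y \<in> D \<and> - x \<in> D \<and> mul x y \<in> D) \<and>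
     (\<forall>x\<in>D. \<forall>y\<in>D. \<forall>z\<in>D. mul (mul x y) z = mul x (mul y z)) \<and>
     (\<forall>x\<in>D. x \<noteq> 0 \<longrightarrow> (\<exists>y\<in>D. mul x y = one \<and> mul y x = one)) \<and>
     \<comment> \<open>A is a free left D-module of rank m\<close>
     (\<exists>b. (\<forall>i<m. b i \<in> A) \<and>
          (\<forall>x\<in>A. \<exists>c. (\<forall>i<m. c i \<in> D) \<and> x = (\<Sum>i<m. mul (c i) (b i))) \<and>
          (\<forall>c. (\<forall>i<m. c i \<in> D) \<and> (\<Sum>i<m. mul (c i) (b i)) = 0 \<longrightarrow> (\<forall>i<m. c i = 0))) \<and>
     \<comment> \<open>Aut(A) has a cyclic subgroup of order m fixing D pointwise\<close>
     (\<exists>g. nonassoc_aut A mul g \<and> card (range (\<lambda>k. g ^^ k)) = m \<and>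
          (\<forall>H\<in>range (\<lambda>k. g ^^ k). \<forall>x\<in>D. H x = x))"

end

theory Submission
  imports Defs
begin

lemma poly_vs: "vector_space (smult :: 'k::field \<Rightarrow> 'k poly \<Rightarrow> 'k poly)"
  by unfold_locales (auto simp: smult_add_right smult_add_left)

lemma coeff_sum_monom: "coeff (\<Sum>i<m. monom (c i) i) n = (if n < m then c n else 0)"
  by (simp add: coeff_sum coeff_monom)

lemma poly_as_sum: "degree p < m \<Longrightarrow> p = (\<Sum>i<m. monom (coeff p i) i)"
  by (rule poly_eqI) (auto simp: coeff_sum_monom intro!: coeff_eq_0)

lemma inj_linear_surj_poly:
  fixes T :: "'k::field poly \<Rightarrow> 'k poly"
  assumes add: "\<And>x y. T (x + y) = T x + T y"
    and sc: "\<And>c x. T (smult c x) = smult c (T x)"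
    and into: "\<And>x. degree x < m \<Longrightarrow> degree (T x) < m"
    and inj: "inj_on T {p. degree p < m}"
    and y: "degree y < m" and m: "0 < m"
  shows "\<exists>x. degree x < m \<and> T x = y"
proof -
  interpret V: vector_space "smult :: 'k \<Rightarrow> 'k poly \<Rightarrow> 'k poly" by (rule poly_vs)
  interpret L: module_hom "smult :: 'k \<Rightarrow> 'k poly \<Rightarrow> 'k poly" smult T
    by unfold_locales (auto simp: add sc smult_add_right smult_add_left)
  define B where "B = (\<lambda>i. monom (1::'k) i) ` {..<m}"
  define W where "W = {p::'k poly. degree p < m}"
  have subW: "V.subspace W" unfolding W_def V.subspace_def
    using m by (auto intro: le_less_trans[OF degree_add_le_max] simp: degree_add_le_max)
  have BW: "B \<subseteq> W" unfolding B_def W_def by (auto simp: degree_monom_eq)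
  have spanB: "V.span B \<subseteq> W" using V.span_minimal[OF BW subW] .
  have WspanB: "W \<subseteq> V.span B"
  proof
    fix p assume "p \<in> W"
    hence dp: "degree p < m" by (simp add: W_def)
    have "p = (\<Sum>i<m. smult (coeff p i) (monom 1 i))"
      using poly_as_sum[OF dp] by (simp add: smult_monom)
    also have "\<dots> \<in> V.span B"
      by (rule V.span_sum) (rule V.span_scale, rule V.span_base, auto simp: B_def)
    finally show "p \<in> V.span B" .
  qed
  have finB: "finite B" by (simp add: B_def)
  have injB: "inj_on (\<lambda>i. monom (1::'k) i) {..<m}"
    by (auto simp: inj_on_def dest!: arg_cong[where f=degree] simp: degree_monom_eq)
  have cardB: "card B = m" using card_image[OF injB] by (simp add: B_def)
  have indB: "V.independent B"
  proof (rule V.independent_if_scalars_zero[OF finB])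
    fix f x assume s: "(\<Sum>x\<in>B. smult (f x) x) = 0" and x: "x \<in> B"
    then obtain i where i: "i < m" "x = monom 1 i" by (auto simp: B_def)
    have "(\<Sum>x\<in>B. smult (f x) x) = (\<Sum>j<m. smult (f (monom 1 j)) (monom 1 j))"
      unfolding B_def by (subst sum.reindex[OF injB]) simp
    hence "coeff (\<Sum>j<m. smult (f (monom 1 j)) (monom 1 j)) i = 0" using s by simp
    hence "f (monom 1 i) = 0" using i by (simp add: coeff_sum coeff_monom if_distrib cong: if_cong)
    thus "f x = 0" using i by simp
  qed
  have injspan: "inj_on T (V.span B)" using inj spanB W_def inj_on_subset by blast
  have indTB: "V.independent (T ` B)" by (rule L.independent_injective_image[OF indB injspan])
  have cardTB: "card (T ` B) = m" using card_image[OF inj_on_subset[OF injspan V.span_superset]] cardB by simp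
  have TBW: "T ` B \<subseteq> V.span B" using BW into WspanB by (auto simp: W_def)
  have "y \<in> V.span (T ` B)"
  proof (rule ccontr)
    assume "y \<notin> V.span (T ` B)"
    hence ind2: "V.independent (insert y (T ` B))" using V.independent_insertI indTB by blast
    have "insert y (T ` B) \<subseteq> V.span B" using TBW y WspanB W_def by auto
    from V.independent_span_bound[OF finB ind2 this]
    have "card (insert y (T ` B)) \<le> m" using cardB by simp
    moreover have "y \<notin> T ` B" using \<open>y \<notin> V.span (T ` B)\<close> V.span_base by blast
    ultimately show False using cardTB finB by simp
  qed
  hence "y \<in> T ` V.span B" by (simp add: L.span_image)
  thus ?thesis using spanB W_def by auto
qed

lemma sum_single: "finite A \<Longrightarrow> a \<in> A \<Longrightarrow> (\<And>i. i \<in> A \<Longrightarrow> i \<noteq> a \<Longrightarrow> g i = 0) \<Longrightarrow> sum g A = g a"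
  by (subst sum.remove[of A a]) (auto intro!: sum.neutral)

locale skew =
  fixes \<sigma> :: "'k::field \<Rightarrow> 'k" and d :: 'k and m :: nat
  assumes s_add: "\<And>x y. \<sigma> (x + y) = \<sigma> x + \<sigma> y"
    and s_mult: "\<And>x y. \<sigma> (x * y) = \<sigma> x * \<sigma> y"
    and s_m: "\<sigma> ^^ m = id" and m_pos: "0 < m" and d_nz: "d \<noteq> 0"
begin

lemma s_zero: "\<sigma> 0 = 0" by (metis add.right_neutral add_left_cancel s_add)

lemma sp_add: "(\<sigma>^^i) (x + y) = (\<sigma>^^i) x + (\<sigma>^^i) y"
  by (induction i) (simp_all add: s_add)
lemma sp_mult: "(\<sigma>^^i) (x * y) = (\<sigma>^^i) x * (\<sigma>^^i) y"
  by (induction i) (simp_all add: s_mult)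
lemma sp_zero[simp]: "(\<sigma>^^i) 0 = 0"
  by (induction i) (simp_all add: s_zero)
lemma sp_minus: "(\<sigma>^^i) (- x) = - (\<sigma>^^i) x"
proof -
  have "(\<sigma>^^i) x + (\<sigma>^^i) (-x) = 0" using sp_add[of i x "-x"] by simp
  thus ?thesis by (simp add: add_eq_0_iff)
qed
lemma sp_diff: "(\<sigma>^^i) (x - y) = (\<sigma>^^i) x - (\<sigma>^^i) y"
  using sp_add[of i x "-y"] sp_minus[of i y] by simp

lemma s_inj: "inj \<sigma>"
proof -
  obtain k where k: "m = Suc k" using m_pos by (cases m) auto
  have "\<sigma>^^(Suc k) = id" using s_m k by simp
  hence e: "(\<sigma>^^k) \<circ> \<sigma> = id" by (simp only: funpow_Suc_right)
  show ?thesis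
  proof (rule injI)
    fix x y assume "\<sigma> x = \<sigma> y"
    hence "((\<sigma>^^k) \<circ> \<sigma>) x = ((\<sigma>^^k) \<circ> \<sigma>) y" by simp
    thus "x = y" using e by simp
  qed
qed

lemma sp_inj: "inj (\<sigma>^^i)" using s_inj by (rule inj_fn)

lemma sp_eq0: "(\<sigma>^^i) x = 0 \<longleftrightarrow> x = 0"
  using sp_inj[of i] by (metis injD sp_zero)

lemma s_one: "\<sigma> 1 = 1"
proof -
  have "\<sigma> 1 = \<sigma> 1 * \<sigma> 1" using s_mult[of 1 1] by simp
  moreover have "\<sigma> 1 \<noteq> 0" using sp_eq0[of 1 1] by simp
  ultimately show ?thesis by (metis mult_cancel_left1)
qed
lemma sp_one[simp]: "(\<sigma>^^i) 1 = 1"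
  by (induction i) (simp_all add: s_one)

lemma sp_mod: "(\<sigma>^^(m + r)) x = (\<sigma>^^r) x"
  by (simp add: funpow_add s_m)

lemma sp_comp: "(\<sigma>^^i) ((\<sigma>^^j) x) = (\<sigma>^^(i+j)) x"
  by (simp add: funpow_add)

lemma sp_inv1: "k \<le> m \<Longrightarrow> (\<sigma>^^(m-k)) ((\<sigma>^^k) x) = x"
  using sp_comp[of "m-k" k x] s_m by simp
lemma sp_inv2: "k \<le> m \<Longrightarrow> (\<sigma>^^k) ((\<sigma>^^(m-k)) x) = x"
  using sp_comp[of k "m-k" x] s_m by simp

lemma atMost_pred: "{..m-1} = {..<m}" using m_pos by auto

subsection \<open>Skew multiplication\<close>

lemma sm_bound:
  assumes "degree p \<le> N" "degree q \<le> M"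
  shows "skew_mult \<sigma> p q = (\<Sum>i\<le>N. \<Sum>j\<le>M. monom (coeff p i * (\<sigma>^^i) (coeff q j)) (i+j))"
proof -
  have inner: "(\<Sum>j\<le>degree q. monom (coeff p i * (\<sigma>^^i) (coeff q j)) (i+j))
      = (\<Sum>j\<le>M. monom (coeff p i * (\<sigma>^^i) (coeff q j)) (i+j))" for i
    by (rule sum.mono_neutral_left) (auto simp: coeff_eq_0 assms)
  have "skew_mult \<sigma> p q = (\<Sum>i\<le>degree p. \<Sum>j\<le>M. monom (coeff p i * (\<sigma>^^i) (coeff q j)) (i+j))"
    unfolding skew_mult_def inner ..
  also have "\<dots> = (\<Sum>i\<le>N. \<Sum>j\<le>M. monom (coeff p i * (\<sigma>^^i) (coeff q j)) (i+j))"
    by (rule sum.mono_neutral_left) (auto simp: coeff_eq_0 assms)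
  finally show ?thesis .
qed

lemma coeff_sm:
  assumes "degree p \<le> N" "degree q \<le> M"
  shows "coeff (skew_mult \<sigma> p q) n = (\<Sum>i\<le>N. \<Sum>j\<le>M. if i + j = n then coeff p i * (\<sigma>^^i) (coeff q j) else 0)"
  by (simp add: sm_bound[OF assms] coeff_sum coeff_monom)

lemma sm_degree:
  assumes "p \<noteq> 0" "q \<noteq> 0"
  shows "degree (skew_mult \<sigma> p q) = degree p + degree q"
proof -
  let ?a = "degree p" and ?b = "degree q"
  have c1: "coeff (skew_mult \<sigma> p q) n = 0" if "n > ?a + ?b" for n
    using that by (simp add: coeff_sm[of p ?a q ?b])
  have "coeff (skew_mult \<sigma> p q) (?a + ?b)
      = (\<Sum>i\<le>?a. \<Sum>j\<le>?b. if i = ?a then (if j = ?b then coeff p i * (\<sigma>^^i) (coeff q j) else 0) else 0)"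
    unfolding coeff_sm[of p ?a q ?b, OF order_refl order_refl]
    by (intro sum.cong refl) auto
  also have "\<dots> = (\<Sum>j\<le>?b. if j = ?b then coeff p ?a * (\<sigma>^^?a) (coeff q j) else 0)"
    by (subst sum_single[of _ ?a]) auto
  also have "\<dots> = coeff p ?a * (\<sigma>^^?a) (coeff q ?b)"
    by (subst sum_single[of _ ?b]) auto
  also have "\<dots> \<noteq> 0" using assms by (simp add: sp_eq0)
  finally have c2: "coeff (skew_mult \<sigma> p q) (?a + ?b) \<noteq> 0" .
  show ?thesis
    by (rule antisym) (auto intro: degree_le c1 le_degree[OF c2] simp: not_le)
qed

lemma sm_zero1[simp]: "skew_mult \<sigma> 0 q = 0"
  by (simp add: skew_mult_def)
lemma sm_zero2[simp]: "skew_mult \<sigma> p 0 = 0"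
  by (simp add: skew_mult_def)

lemma sm_add1: "skew_mult \<sigma> (p1 + p2) q = skew_mult \<sigma> p1 q + skew_mult \<sigma> p2 q"
proof -
  let ?N = "max (degree p1) (degree p2)"
  have "degree (p1 + p2) \<le> ?N" by (rule degree_add_le_max)
  thus ?thesis
    by (simp add: sm_bound[of _ ?N q "degree q"] distrib_right add_monom[symmetric] sum.distrib)
qed

lemma sm_diff1: "skew_mult \<sigma> (p1 - p2) q = skew_mult \<sigma> p1 q - skew_mult \<sigma> p2 q"
  using sm_add1[of "p1 - p2" p2 q] by (simp add: algebra_simps)

lemma sm_sum1: "skew_mult \<sigma> (\<Sum>k\<in>K. g k) q = (\<Sum>k\<in>K. skew_mult \<sigma> (g k) q)"
  by (induction K rule: infinite_finite_induct) (simp_all add: sm_add1)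

lemma sm_monom_left:
  assumes "degree q \<le> M"
  shows "skew_mult \<sigma> (monom a r) q = (\<Sum>j\<le>M. monom (a * (\<sigma>^^r) (coeff q j)) (r+j))"
proof -
  have "skew_mult \<sigma> (monom a r) q = (\<Sum>i\<le>r. \<Sum>j\<le>M. monom (coeff (monom a r) i * (\<sigma>^^i) (coeff q j)) (i+j))"
    by (rule sm_bound) (auto simp: degree_monom_le assms)
  also have "\<dots> = (\<Sum>j\<le>M. monom (coeff (monom a r) r * (\<sigma>^^r) (coeff q j)) (r+j))"
    by (rule sum_single) (auto simp: coeff_monom)
  finally show ?thesis by simp
qed

abbreviation "fp \<equiv> monom 1 m - [:d:]"

lemma coeff_fp: "coeff fp j = (if j = m then 1 else 0) - (if j = 0 then d else 0)"
  by (auto simp: coeff_monom coeff_pCons')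

lemma degree_fp: "degree fp = m"
proof (rule antisym)
  show "degree fp \<le> m" by (rule degree_le) (auto simp: coeff_fp coeff_pCons')
  show "m \<le> degree fp" by (rule le_degree) (use m_pos in \<open>simp add: coeff_fp coeff_pCons'\<close>)
qed

lemma fp_nz: "fp \<noteq> 0" using degree_fp m_pos by auto

lemma sm_monom_fp: "skew_mult \<sigma> (monom e r) fp = monom e (r+m) - monom (e * (\<sigma>^^r) d) r"
proof -
  have "skew_mult \<sigma> (monom e r) fp = (\<Sum>j\<le>m. monom (e * (\<sigma>^^r) (coeff fp j)) (r+j))"
    by (rule sm_monom_left) (simp add: degree_fp)
  also have "\<dots> = (\<Sum>j\<le>m. monom (e * (if j = m then 1 else 0)) (r+j)) -
                  (\<Sum>j\<le>m. monom (e * (if j = 0 then (\<sigma>^^r) d else 0)) (r+j))"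
    unfolding coeff_fp sp_diff sum_subtractf[symmetric] right_diff_distrib diff_monom[symmetric]
    by (intro sum.cong refl) auto
  also have "(\<Sum>j\<le>m. monom (e * (if j = m then 1 else 0)) (r+j)) = monom e (r+m)"
    by (subst sum_single[of _ m]) auto
  also have "(\<Sum>j\<le>m. monom (e * (if j = 0 then (\<sigma>^^r) d else 0)) (r+j)) = monom (e * (\<sigma>^^r) d) r"
    by (subst sum_single[of _ 0]) auto
  finally show ?thesis .
qed

lemma rmod_eq:
  assumes r: "degree r < m" and g: "g = skew_mult \<sigma> q fp + r"
  shows "skew_rmod \<sigma> g fp = r"
  unfolding skew_rmod_def
proof (rule the_equality)
  show "(r = 0 \<or> degree r < degree fp) \<and> (\<exists>q. g = skew_mult \<sigma> q fp + r)"
    using r g by (auto simp: degree_fp)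
next
  fix r' assume "(r' = 0 \<or> degree r' < degree fp) \<and> (\<exists>q. g = skew_mult \<sigma> q fp + r')"
  then obtain q' where r': "degree r' < m" and g': "g = skew_mult \<sigma> q' fp + r'"
    using m_pos by (auto simp: degree_fp)
  have eq: "skew_mult \<sigma> (q - q') fp = r' - r" using g g' by (simp add: sm_diff1 algebra_simps)
  show "r' = r"
  proof (cases "q = q'")
    case True thus ?thesis using eq by simp
  next
    case False
    hence "degree (skew_mult \<sigma> (q - q') fp) = degree (q - q') + m"
      using sm_degree[of "q - q'" fp] fp_nz degree_fp by simp
    moreover have "degree (r' - r) < m"
      using degree_diff_le_max[of r' r] r r' by simp
    ultimately show ?thesis using eq by simp
  qed
qed

end

context skew begin

definition mt :: "'k \<Rightarrow> nat \<Rightarrow> 'k \<Rightarrow> nat \<Rightarrow> 'k poly" where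
  "mt a i b j = (if i + j < m then monom (a * (\<sigma>^^i) b) (i+j)
                 else monom (a * (\<sigma>^^i) b * (\<sigma>^^(i+j-m)) d) (i+j-m))"

definition pr :: "'k poly \<Rightarrow> 'k poly \<Rightarrow> 'k poly" where
  "pr p q = (\<Sum>i<m. \<Sum>j<m. mt (coeff p i) i (coeff q j) j)"

lemma mt_deg: "i < m \<Longrightarrow> j < m \<Longrightarrow> degree (mt a i b j) \<le> m - 1"
  unfolding mt_def by (auto intro: order.trans[OF degree_monom_le])

lemma pr_deg: "degree (pr p q) < m"
proof -
  have "degree (pr p q) \<le> m - 1" unfolding pr_def
    by (auto intro!: degree_sum_le mt_deg[simplified])
  thus ?thesis using m_pos by simp
qed

lemma mt_add1: "mt (a + a') i b j = mt a i b j + mt a' i b j"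
  by (simp add: mt_def distrib_right add_monom)
lemma mt_add2: "mt a i (b + b') j = mt a i b j + mt a i b' j"
  by (simp add: mt_def sp_add distrib_right distrib_left add_monom)
lemma mt_zero1[simp]: "mt 0 i b j = 0" by (simp add: mt_def)
lemma mt_zero2[simp]: "mt a i 0 j = 0" by (simp add: mt_def)

lemma pr_add1: "pr (p + p') q = pr p q + pr p' q"
  by (simp add: pr_def mt_add1 sum.distrib)
lemma pr_add2: "pr p (q + q') = pr p q + pr p q'"
  by (simp add: pr_def mt_add2 sum.distrib)
lemma pr_zero1[simp]: "pr 0 q = 0" by (simp add: pr_def)
lemma pr_zero2[simp]: "pr p 0 = 0" by (simp add: pr_def)
lemma pr_diff2: "pr p (q - q') = pr p q - pr p q'"
  using pr_add2[of p "q - q'" q'] by (simp add: algebra_simps)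
lemma pr_diff1: "pr (p - p') q = pr p q - pr p' q"
  using pr_add1[of "p - p'" p' q] by (simp add: algebra_simps)

lemma pr_monom_left: "i < m \<Longrightarrow> pr (monom a i) q = (\<Sum>j<m. mt a i (coeff q j) j)"
  unfolding pr_def by (subst sum_single[of _ i]) (auto simp: coeff_monom)

lemma pr_const_monom: "i < m \<Longrightarrow> pr [:a:] (monom b i) = monom (a * b) i"
  using pr_monom_left[of 0 a "monom b i"] m_pos
  by (subst (asm) sum_single[of _ i]) (auto simp: coeff_monom mt_def monom_0[symmetric])

lemma pr_const: "pr [:a:] [:b:] = [:a * b:]"
  using pr_const_monom[of 0 a b] m_pos by (simp add: monom_0)

definition rc :: "'k \<Rightarrow> 'k poly \<Rightarrow> 'k poly" where
  "rc c z = (\<Sum>k<m. monom (coeff z k * (\<sigma>^^k) c) k)"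

lemma pr_const_right: "pr z [:c:] = rc c z"
  unfolding pr_def rc_def
  by (intro sum.cong refl, subst sum_single[of _ 0]) (use m_pos in \<open>auto simp: mt_def coeff_pCons'\<close>)

lemma rc_add: "rc c (z + z') = rc c z + rc c z'"
  by (simp add: rc_def distrib_right add_monom[symmetric] sum.distrib)
lemma rc_zero[simp]: "rc c 0 = 0" by (simp add: rc_def)
lemma rc_sum: "rc c (\<Sum>k\<in>K. g k) = (\<Sum>k\<in>K. rc c (g k))"
  by (induction K rule: infinite_finite_induct) (simp_all add: rc_add)
lemma rc_monom: "k < m \<Longrightarrow> rc c (monom e k) = monom (e * (\<sigma>^^k) c) k"
  unfolding rc_def by (subst sum_single[of _ k]) (auto simp: coeff_monom)

lemma coeff_sum_lt: "j < m \<Longrightarrow> coeff (\<Sum>k<m. monom (g k) k) j = g j"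
  by (simp add: coeff_sum_monom)

lemma rc_mt: "i < m \<Longrightarrow> j < m \<Longrightarrow> rc c (mt a i b j) = mt a i (b * (\<sigma>^^j) c) j"
proof (cases "i + j < m")
  case True
  assume "i < m" "j < m"
  thus ?thesis using True by (simp add: mt_def rc_monom sp_mult sp_comp mult.assoc)
next
  case False
  assume "i < m" "j < m"
  have e: "(\<sigma>^^(i+j)) c = (\<sigma>^^(i+j-m)) c"
    using sp_mod[of "i+j-m" c] False by simp
  show ?thesis using False \<open>i<m\<close> \<open>j<m\<close>
    by (simp add: mt_def rc_monom sp_mult sp_comp e algebra_simps)
qed

lemma nucleus: "pr a (pr x [:c:]) = pr (pr a x) [:c:]"
proof -
  have "pr (pr a x) [:c:] = (\<Sum>i<m. \<Sum>j<m. rc c (mt (coeff a i) i (coeff x j) j))"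
    by (simp only: pr_const_right) (simp add: pr_def rc_sum)
  also have "\<dots> = (\<Sum>i<m. \<Sum>j<m. mt (coeff a i) i (coeff x j * (\<sigma>^^j) c) j)"
    by (intro sum.cong refl) (simp add: rc_mt)
  also have "\<dots> = pr a (pr x [:c:])"
    by (simp only: pr_const_right, unfold pr_def, intro sum.cong refl) (simp add: rc_def coeff_sum_lt)
  finally show ?thesis by simp
qed

lemma skew_decomp:
  assumes p: "degree p < m" and q: "degree q < m"
  shows "skew_mult \<sigma> p q = skew_mult \<sigma> (\<Sum>i<m. \<Sum>j<m. if i + j < m then 0
              else monom (coeff p i * (\<sigma>^^i) (coeff q j)) (i+j-m)) fp + pr p q"
proof -
  have "skew_mult \<sigma> p q = (\<Sum>i<m. \<Sum>j<m. monom (coeff p i * (\<sigma>^^i) (coeff q j)) (i+j))"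
    using sm_bound[of p "m-1" q "m-1"] p q by (simp add: atMost_pred[simplified])
  also have "\<dots> = (\<Sum>i<m. \<Sum>j<m. (if i + j < m then 0
              else skew_mult \<sigma> (monom (coeff p i * (\<sigma>^^i) (coeff q j)) (i+j-m)) fp)
              + mt (coeff p i) i (coeff q j) j)"
    by (intro sum.cong refl) (simp add: sm_monom_fp mt_def)
  also have "\<dots> = skew_mult \<sigma> (\<Sum>i<m. \<Sum>j<m. if i + j < m then 0
              else monom (coeff p i * (\<sigma>^^i) (coeff q j)) (i+j-m)) fp + pr p q"
    unfolding pr_def sm_sum1 sum.distrib
    by (intro arg_cong2[where f="(+)"] sum.cong refl) auto
  finally show ?thesis .
qed

lemma Sf_mult_pr: "degree p < m \<Longrightarrow> degree q < m \<Longrightarrow> Sf_mult \<sigma> fp p q = pr p q"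
  unfolding Sf_mult_def by (rule rmod_eq[OF pr_deg skew_decomp])

end

context skew begin

abbreviation "V \<equiv> {p::'k poly. degree p < m}"

lemma deg_sum_monom1: "degree (\<Sum>k<m. monom (g k) k) \<le> m - 1"
  apply (rule degree_sum_le)
  subgoal by simp
  subgoal for k apply (rule le_trans[OF degree_monom_le]) by simp
  done
lemma deg_sum_monom: "degree (\<Sum>k<m. monom (g k) k) < m"
  using deg_sum_monom1[of g] m_pos by linarith

lemma V_diff: "degree (x::'k poly) < m \<Longrightarrow> degree y < m \<Longrightarrow> degree (x - y) < m"
  using degree_diff_le_max[of x y] by simp

lemma V_add: "degree (x::'k poly) < m \<Longrightarrow> degree y < m \<Longrightarrow> degree (x + y) < m"
  using degree_add_le_max[of x y] by simp

lemma poly_eq_V: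
  assumes "degree (x::'k poly) < m" "degree y < m" "\<And>n. n < m \<Longrightarrow> coeff x n = coeff y n"
  shows "x = y"
proof (rule poly_eqI)
  fix n show "coeff x n = coeff y n"
  proof (cases "n < m")
    case True thus ?thesis by (rule assms(3))
  next
    case False
    hence "degree x < n" "degree y < n" using assms(1,2) by linarith+
    thus ?thesis by (simp add: coeff_eq_0)
  qed
qed

definition rho :: "'k poly \<Rightarrow> 'k poly" where
  "rho u = (\<Sum>j<m. monom ((\<sigma>^^j) (coeff u j)) j)"
definition tau :: "'k poly \<Rightarrow> 'k poly" where
  "tau v = (\<Sum>k<m. monom ((\<sigma>^^(m-k)) (coeff v k)) k)"

lemma coeff_rho: "coeff (rho u) n = (if n < m then (\<sigma>^^n) (coeff u n) else 0)"
  by (simp add: rho_def coeff_sum_monom)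
lemma coeff_tau: "coeff (tau u) n = (if n < m then (\<sigma>^^(m-n)) (coeff u n) else 0)"
  by (simp add: tau_def coeff_sum_monom)

lemma rho_V: "degree (rho u) < m" unfolding rho_def by (rule deg_sum_monom)
lemma tau_V: "degree (tau u) < m" unfolding tau_def by (rule deg_sum_monom)

lemma rho_tau: "degree v < m \<Longrightarrow> rho (tau v) = v"
  by (rule poly_eq_V) (auto simp: rho_V coeff_rho coeff_tau sp_inv2)
lemma tau_rho: "degree v < m \<Longrightarrow> tau (rho v) = v"
  by (rule poly_eq_V) (auto simp: tau_V coeff_rho coeff_tau sp_inv1)

lemma rho_add: "rho (x + y) = rho x + rho y"
  by (rule poly_eqI) (simp add: coeff_rho sp_add)
lemma tau_add: "tau (x + y) = tau x + tau y"
  by (rule poly_eqI) (simp add: coeff_tau sp_add)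

lemma rho_smult: "rho (smult c u) = pr (rho u) [:c:]"
  unfolding pr_const_right
  by (rule poly_eqI) (simp add: coeff_rho rc_def coeff_sum_monom sp_mult mult.commute)

lemma tau_rc: "tau (rc c v) = smult c (tau v)"
  by (rule poly_eqI) (simp add: coeff_tau rc_def coeff_sum_monom sp_mult sp_inv1)

lemma left_bij:
  assumes RD: "\<And>h. degree h < m \<Longrightarrow> h \<noteq> 0 \<Longrightarrow> inj_on (\<lambda>x. pr x h) V"
    and a: "degree a < m" "a \<noteq> 0"
  shows "bij_betw (\<lambda>x. pr a x) V V"
proof -
  have injL: "inj_on (\<lambda>x. pr a x) V"
  proof (rule inj_onI)
    fix x y assume x: "x \<in> V" and y: "y \<in> V" and e: "pr a x = pr a y"
    show "x = y"
    proof (rule ccontr)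
      assume "x \<noteq> y"
      hence "x - y \<noteq> 0" by simp
      moreover have "degree (x - y) < m" using x y V_diff by simp
      moreover have "pr a (x - y) = pr 0 (x - y)" using e by (simp add: pr_diff2)
      ultimately have "a = 0" using inj_onD[OF RD[of "x - y"], of a 0] a m_pos by simp
      thus False using a by simp
    qed
  qed
  define T where "T u = tau (pr a (rho u))" for u
  have surj: "\<exists>x. degree x < m \<and> pr a x = y" if y: "degree y < m" for y
  proof -
    have "\<exists>u. degree u < m \<and> T u = tau y"
    proof (rule inj_linear_surj_poly)
      show "T (x + y) = T x + T y" for x y by (simp add: T_def rho_add pr_add2 tau_add)
      show "T (smult c x) = smult c (T x)" for c x
        by (simp only: T_def rho_smult nucleus) (simp only: pr_const_right tau_rc)
      show "degree (T x) < m" for x by (simp add: T_def tau_V)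
      show "inj_on T V"
      proof (rule inj_onI)
        fix x y assume x: "x \<in> V" and y: "y \<in> V" and e: "T x = T y"
        hence "rho (T x) = rho (T y)" by simp
        hence "pr a (rho x) = pr a (rho y)" by (simp add: T_def rho_tau pr_deg)
        hence "rho x = rho y" using injL rho_V by (auto dest: inj_onD)
        hence "tau (rho x) = tau (rho y)" by simp
        thus "x = y" using x y by (simp add: tau_rho)
      qed
    qed (simp_all add: tau_V m_pos)
    then obtain u where u: "degree u < m" "T u = tau y" by blast
    hence "rho (T u) = y" using y by (simp add: rho_tau)
    hence "pr a (rho u) = y" by (simp add: T_def rho_tau pr_deg)
    thus ?thesis using rho_V by blast
  qed
  have "(\<lambda>x. pr a x) ` V = V"
  proof
    show "(\<lambda>x. pr a x) ` V \<subseteq> V" using pr_deg by auto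
    show "V \<subseteq> (\<lambda>x. pr a x) ` V"
    proof
      fix y assume "y \<in> V"
      then obtain x where "degree x < m" "pr a x = y" using surj by auto
      thus "y \<in> (\<lambda>x. pr a x) ` V" by force
    qed
  qed
  thus ?thesis unfolding bij_betw_def using injL by simp
qed

lemma sm_const: "skew_mult \<sigma> [:a:] [:b:] = [:a * b:]"
  using sm_bound[of "[:a:]" 0 "[:b:]" 0] by (simp add: monom_0)

lemma const_unit: "c \<noteq> 0 \<Longrightarrow> skew_unit \<sigma> [:c:]"
  unfolding skew_unit_def
  by (rule exI[of _ "[:inverse c:]"]) (simp add: sm_const one_pCons)

lemma sm_one_fp: "skew_mult \<sigma> 1 fp = fp"
  using sm_monom_fp[of 1 0] by (simp add: monom_0 one_pCons[symmetric])

lemma irred: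
  assumes RD: "\<And>h. degree h < m \<Longrightarrow> h \<noteq> 0 \<Longrightarrow> inj_on (\<lambda>x. pr x h) V"
  shows "skew_irreducible \<sigma> fp"
  unfolding skew_irreducible_def
proof (intro conjI allI impI)
  show "\<not> skew_unit \<sigma> fp"
  proof
    assume "skew_unit \<sigma> fp"
    then obtain q where q: "skew_mult \<sigma> fp q = 1" unfolding skew_unit_def by blast
    hence "q \<noteq> 0" by auto
    hence "degree (skew_mult \<sigma> fp q) = m + degree q" using sm_degree fp_nz degree_fp by simp
    thus False using q m_pos by simp
  qed
next
  fix g h assume f: "fp = skew_mult \<sigma> g h"
  have g0: "g \<noteq> 0" and h0: "h \<noteq> 0" using f fp_nz by auto
  have deg: "degree g + degree h = m" using sm_degree[OF g0 h0] f degree_fp by simp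
  show "skew_unit \<sigma> g \<or> skew_unit \<sigma> h"
  proof (cases "degree g = 0")
    case True
    then obtain c where "g = [:c:]" using degree0_coeffs by blast
    thus ?thesis using g0 const_unit by auto
  next
    case gpos: False
    show ?thesis
    proof (cases "degree h = 0")
      case True
      then obtain c where "h = [:c:]" using degree0_coeffs by blast
      thus ?thesis using h0 const_unit by auto
    next
      case False
      have gV: "degree g < m" and hV: "degree h < m" using deg gpos False by auto
      have "pr g h = Sf_mult \<sigma> fp g h" using Sf_mult_pr[OF gV hV] by simp
      also have "\<dots> = skew_rmod \<sigma> fp fp" using f by (simp add: Sf_mult_def)
      also have "\<dots> = 0" by (rule rmod_eq[where q=1]) (use m_pos sm_one_fp in auto)
      finally have "pr g h = pr 0 h" by simp
      hence "g = 0" using inj_onD[OF RD[OF hV h0], of g 0] gV m_pos by simp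
      thus ?thesis using g0 by simp
    qed
  qed
qed

end

context skew begin

lemma carrier_V: "Sf_carrier fp = V"
  unfolding Sf_carrier_def degree_fp using m_pos by auto

definition hw :: "'k \<Rightarrow> 'k poly \<Rightarrow> 'k poly" where
  "hw w p = (\<Sum>k<m. monom (w^k * coeff p k) k)"

lemma coeff_hw: "coeff (hw w p) n = (if n < m then w^n * coeff p n else 0)"
  by (simp add: hw_def coeff_sum_monom)
lemma hw_V: "degree (hw w p) < m" unfolding hw_def by (rule deg_sum_monom)
lemma hw_add: "hw w (x + y) = hw w x + hw w y"
  by (rule poly_eqI) (simp add: coeff_hw distrib_left)
lemma hw_zero[simp]: "hw w 0 = 0" by (simp add: hw_def)
lemma hw_sum: "hw w (\<Sum>k\<in>K. g k) = (\<Sum>k\<in>K. hw w (g k))"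
  by (induction K rule: infinite_finite_induct) (simp_all add: hw_add)
lemma hw_monom: "k < m \<Longrightarrow> hw w (monom e k) = monom (w^k * e) k"
  by (rule poly_eqI) (simp add: coeff_hw coeff_monom)
lemma hw_comp: "hw a (hw b p) = hw (a * b) p"
  by (rule poly_eqI) (simp add: coeff_hw power_mult_distrib mult.assoc)
lemma hw_one: "degree p < m \<Longrightarrow> hw 1 p = p"
  by (rule poly_eq_V) (simp_all add: coeff_hw hw_V)

lemma sp_fix: assumes "\<sigma> w = w" shows "(\<sigma>^^i) (w^j) = w^j"
proof -
  have a: "(\<sigma>^^i) w = w" by (induction i) (simp_all add: assms)
  show ?thesis by (induction j) (simp_all add: sp_mult a)
qed

lemma hw_mt:
  assumes w: "\<sigma> w = w" "w ^ m = 1" and ij: "i < m" "j < m"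
  shows "hw w (mt a i b j) = mt (w^i * a) i (w^j * b) j"
proof (cases "i + j < m")
  case True
  thus ?thesis using ij
    by (simp add: mt_def hw_monom sp_mult sp_fix[OF w(1)] power_add algebra_simps)
next
  case False
  have e: "w^(i+j) = w^(i+j-m)"
    using False w(2) by (metis le_add_diff_inverse not_less power_add mult_1_left)
  have "hw w (mt a i b j) = monom (w^(i+j-m) * (a * (\<sigma> ^^ i) b * (\<sigma> ^^ (i + j - m)) d)) (i+j-m)"
    using False ij by (simp add: mt_def hw_monom)
  also have "\<dots> = mt (w^i * a) i (w^j * b) j"
    using False by (simp add: mt_def sp_mult sp_fix[OF w(1)] e[symmetric] power_add algebra_simps)
  finally show ?thesis .
qed

lemma hw_pr:
  assumes w: "\<sigma> w = w" "w ^ m = 1"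
  shows "hw w (pr x y) = pr (hw w x) (hw w y)"
  unfolding pr_def hw_sum
  by (intro sum.cong refl) (simp add: hw_mt[OF w] coeff_hw)

lemma D_mult: "Sf_mult \<sigma> fp [:a:] [:b:] = [:a * b:]"
  using Sf_mult_pr[of "[:a:]" "[:b:]"] m_pos by (simp add: pr_const)

lemma pow_mod: assumes "w ^ m = (1::'k)" shows "w ^ k = w ^ (k mod m)"
proof -
  have "w ^ k = w ^ (m * (k div m) + k mod m)" by simp
  also have "\<dots> = w ^ (k mod m)" by (simp only: power_add power_mult assms) simp
  finally show ?thesis .
qed

lemma cyc:
  assumes RD: "\<And>h. degree h < m \<Longrightarrow> h \<noteq> 0 \<Longrightarrow> bij_betw (\<lambda>x. pr x h) V V"
    and w: "\<sigma> w = w" "w ^ m = 1" "\<forall>k. 0 < k \<and> k < m \<longrightarrow> w ^ k \<noteq> 1"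
  shows "nonassoc_cyclic_ext (Sf_carrier fp) (Sf_mult \<sigma> fp) 1 (range (\<lambda>a. [:a:])) m"
proof -
  let ?A = "Sf_carrier fp" and ?M = "Sf_mult \<sigma> fp" and ?D = "range (\<lambda>a. [:a:])"
  have A: "?A = V" by (rule carrier_V)
  have MV: "x \<in> V \<Longrightarrow> y \<in> V \<Longrightarrow> ?M x y = pr x y" for x y using Sf_mult_pr by simp
  have oneV: "(1::'k poly) \<in> V" using m_pos by simp
  have constV: "[:a:] \<in> V" for a using m_pos by simp
  have c1: "\<exists>x\<in>?A. x \<noteq> 0" by (rule bexI[of _ 1]) (use A oneV in auto)
  have c2: "1 \<in> ?A" using A oneV by simp
  have RDi: "inj_on (\<lambda>x. pr x h) V" if "degree h < m" "h \<noteq> 0" for h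
    using RD[OF that] by (simp add: bij_betw_def)
  have c3: "\<forall>a\<in>?A. a \<noteq> 0 \<longrightarrow> bij_betw (\<lambda>x. ?M a x) ?A ?A \<and> bij_betw (\<lambda>x. ?M x a) ?A ?A"
  proof (intro ballI impI conjI)
    fix a :: "'k poly" assume a: "a \<in> ?A" "a \<noteq> 0"
    hence aV: "degree a < m" using A by simp
    have "bij_betw (\<lambda>x. pr a x) V V" by (rule left_bij[OF RDi aV a(2)])
    thus "bij_betw (\<lambda>x. ?M a x) ?A ?A" unfolding A
      by (rule bij_betw_cong[THEN iffD2, rotated]) (use MV aV in auto)
    have "bij_betw (\<lambda>x. pr x a) V V" by (rule RD[OF aV a(2)])
    thus "bij_betw (\<lambda>x. ?M x a) ?A ?A" unfolding A
      by (rule bij_betw_cong[THEN iffD2, rotated]) (use MV aV in auto)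
  qed
  have c4: "?D \<subseteq> ?A" using A constV by auto
  have c5: "0 \<in> ?D" by (auto intro: range_eqI[of _ _ 0])
  have c6: "1 \<in> ?D" by (auto intro: range_eqI[of _ _ 1] simp: one_pCons)
  have c7: "\<forall>x\<in>?D. \<forall>y\<in>?D. x + y \<in> ?D \<and> - x \<in> ?D \<and> ?M x y \<in> ?D"
    by (auto simp: D_mult intro: range_eqI)
  have c8: "\<forall>x\<in>?D. \<forall>y\<in>?D. \<forall>z\<in>?D. ?M (?M x y) z = ?M x (?M y z)"
    by (auto simp: D_mult mult.assoc)
  have c9: "\<forall>x\<in>?D. x \<noteq> 0 \<longrightarrow> (\<exists>y\<in>?D. ?M x y = 1 \<and> ?M y x = 1)"
  proof (intro ballI impI)
    fix x :: "'k poly" assume "x \<in> ?D" "x \<noteq> 0"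
    then obtain a where a: "x = [:a:]" "a \<noteq> 0" by auto
    show "\<exists>y\<in>?D. ?M x y = 1 \<and> ?M y x = 1"
      by (rule bexI[of _ "[:inverse a:]"]) (use a in \<open>auto simp: D_mult one_pCons\<close>)
  qed
  have Mb: "?M [:a:] (monom 1 i) = monom a i" if "i < m" for a i
    using Sf_mult_pr[of "[:a:]" "monom 1 i"] pr_const_monom[OF that, of a 1] that m_pos
    by (simp add: degree_monom_eq)
  have c10: "\<exists>b. (\<forall>i<m. b i \<in> ?A) \<and>
          (\<forall>x\<in>?A. \<exists>c. (\<forall>i<m. c i \<in> ?D) \<and> x = (\<Sum>i<m. ?M (c i) (b i))) \<and>
          (\<forall>c. (\<forall>i<m. c i \<in> ?D) \<and> (\<Sum>i<m. ?M (c i) (b i)) = 0 \<longrightarrow> (\<forall>i<m. c i = 0))"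
  proof (rule exI[of _ "\<lambda>i. monom 1 i"], intro conjI allI ballI impI)
    show "monom 1 i \<in> ?A" if "i < m" for i using that A by (simp add: degree_monom_eq)
  next
    fix x :: "'k poly" assume "x \<in> ?A"
    hence xV: "degree x < m" using A by simp
    show "\<exists>c. (\<forall>i<m. c i \<in> ?D) \<and> x = (\<Sum>i<m. ?M (c i) (monom 1 i))"
    proof (rule exI[of _ "\<lambda>i. [:coeff x i:]"], intro conjI allI impI)
      show "[:coeff x i:] \<in> ?D" for i by simp
      have "(\<Sum>i<m. ?M [:coeff x i:] (monom 1 i)) = (\<Sum>i<m. monom (coeff x i) i)"
        by (intro sum.cong refl) (simp add: Mb)
      thus "x = (\<Sum>i<m. ?M [:coeff x i:] (monom 1 i))" using poly_as_sum[OF xV] by simp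
    qed
  next
    fix c :: "nat \<Rightarrow> 'k poly" and i assume h: "(\<forall>i<m. c i \<in> ?D) \<and> (\<Sum>i<m. ?M (c i) (monom 1 i)) = 0" and i: "i < m"
    have cD: "c j = [:coeff (c j) 0:]" if "j < m" for j using h that by auto
    have "(\<Sum>i<m. ?M (c i) (monom 1 i)) = (\<Sum>j<m. monom (coeff (c j) 0) j)"
      by (intro sum.cong refl) (subst cD, simp, simp add: Mb)
    hence "coeff (\<Sum>j<m. monom (coeff (c j) 0) j) i = 0" using h by simp
    hence "coeff (c i) 0 = 0" using i by (simp add: coeff_sum_monom)
    thus "c i = 0" using cD[OF i] by simp
  qed
  have w0: "w \<noteq> 0" using w(2) m_pos by (metis zero_power zero_neq_one)
  define H where "H p = (if p \<in> V then hw w p else p)" for p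
  have Hpow: "(H ^^ k) p = (if p \<in> V then hw (w^k) p else p)" for k p
  proof (induction k)
    case 0 show ?case by (simp add: hw_one)
  next
    case (Suc k)
    have "(H ^^ Suc k) p = H ((H ^^ k) p)" by simp
    also have "\<dots> = H (if p \<in> V then hw (w^k) p else p)" using Suc.IH by simp
    also have "\<dots> = (if p \<in> V then hw (w^Suc k) p else p)"
      by (simp add: H_def hw_V hw_comp mult.commute)
    finally show ?case .
  qed
  have autH: "nonassoc_aut ?A ?M H"
    unfolding nonassoc_aut_def A
  proof (intro conjI ballI allI impI)
    show "bij_betw H V V"
    proof (rule bij_betw_byWitness[where f'="\<lambda>p. if p \<in> V then hw (inverse w) p else p"])
      show "\<forall>a\<in>V. (if H a \<in> V then hw (inverse w) (H a) else H a) = a"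
        using w0 by (simp add: H_def hw_V hw_comp hw_one)
      show "\<forall>a\<in>V. H (if a \<in> V then hw (inverse w) a else a) = a"
        using w0 by (simp add: H_def hw_V hw_comp hw_one)
      show "H ` V \<subseteq> V" by (auto simp: H_def hw_V)
      show "(\<lambda>p. if p \<in> V then hw (inverse w) p else p) ` V \<subseteq> V" by (auto simp: hw_V)
    qed
  next
    fix x y :: "'k poly" assume "x \<in> V" "y \<in> V"
    thus "H (x + y) = H x + H y" by (simp add: H_def V_add hw_add)
    show "H (?M x y) = ?M (H x) (H y)" using \<open>x \<in> V\<close> \<open>y \<in> V\<close>
      by (simp add: H_def MV hw_V pr_deg hw_pr[OF w(1,2)])
  next
    fix x :: "'k poly" assume "x \<notin> V" thus "H x = x" by (simp add: H_def)
  qed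
  have rng: "range (\<lambda>k. H ^^ k) = (\<lambda>k. H ^^ k) ` {..<m}"
  proof
    show "range (\<lambda>k. H ^^ k) \<subseteq> (\<lambda>k. H ^^ k) ` {..<m}"
    proof
      fix F :: "'k poly \<Rightarrow> 'k poly" assume "F \<in> range (\<lambda>k. H ^^ k)"
      then obtain k where k: "F = H ^^ k" by auto
      have "H ^^ k = H ^^ (k mod m)"
        by (rule ext) (simp add: Hpow pow_mod[OF w(2), of k])
      thus "F \<in> (\<lambda>k. H ^^ k) ` {..<m}" using k m_pos by auto
    qed
  qed auto
  have injk: "inj_on (\<lambda>k. H ^^ k) {..<m}"
  proof (rule inj_onI)
    fix k l assume k: "k \<in> {..<m}" and l: "l \<in> {..<m}" and e: "H ^^ k = H ^^ l"
    show "k = l"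
    proof (rule ccontr)
      assume ne: "k \<noteq> l"
      hence m2: "1 < m" using k l by auto
      have "(H ^^ k) (monom 1 1) = (H ^^ l) (monom 1 1)" using e by simp
      hence "monom (w^k) 1 = monom (w^l) 1" using m2
        by (simp add: Hpow degree_monom_eq hw_monom)
      hence eq: "w^k = w^l" by simp
      have gen: "False" if "a < b" "b < m" "w^a = w^b" for a b
      proof -
        have "w^b = w^a * w^(b-a)" using that(1) by (simp add: power_add[symmetric])
        hence "w^(b-a) = 1" using that(3) w0 by simp
        thus False using w(3) that by auto
      qed
      show False using ne eq gen k l by (cases "k < l") (auto, metis linorder_neqE_nat)
    qed
  qed
  have c11: "\<exists>g. nonassoc_aut ?A ?M g \<and> card (range (\<lambda>k. g ^^ k)) = m \<and>
          (\<forall>F\<in>range (\<lambda>k. g ^^ k). \<forall>x\<in>?D. F x = x)"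
  proof (rule exI[of _ H], intro conjI)
    show "nonassoc_aut ?A ?M H" by (rule autH)
    show "card (range (\<lambda>k. H ^^ k)) = m" unfolding rng using card_image[OF injk] by simp
    show "\<forall>F\<in>range (\<lambda>k. H ^^ k). \<forall>x\<in>?D. F x = x"
      using m_pos by (auto simp: Hpow monom_0[symmetric] hw_monom simp del: monom_eq_const_iff)
  qed
  show ?thesis unfolding nonassoc_cyclic_ext_def
    by (intro conjI c1 c2 c3 c4 c5 c6 c7 c8 c9 c10 c11)
qed

end

locale Sctx =
  fixes mul :: "'a::ab_group_add \<Rightarrow> 'a \<Rightarrow> 'a"
    and one :: 'a
    and emb :: "'k::field \<Rightarrow> 'a"
    and m :: nat
    and t :: 'a
    and d :: 'k
    and \<sigma> :: "'k \<Rightarrow> 'k"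
  assumes ring: "unital_nonassoc_ring mul one"
    and emb_inj: "inj emb"
    and emb_add: "\<forall>a b. emb (a + b) = emb a + emb b"
    and emb_mult: "\<forall>a b. emb (a * b) = mul (emb a) (emb b)"
    and emb_one: "emb 1 = one"
    and h1_span: "\<forall>x. \<exists>c. x = (\<Sum>i<m. mul (emb (c i)) (tpow mul one t i))"
    and h1_indep: "\<forall>c. (\<Sum>i<m. mul (emb (c i)) (tpow mul one t i)) = 0 \<longrightarrow> (\<forall>i<m. c i = 0)"
    and h2: "\<forall>a. a \<noteq> 0 \<longrightarrow> (\<exists>a'. a' \<noteq> 0 \<and> mul t (emb a) = mul (emb a') t)"
    and h3: "\<forall>a b c i j k. i + j < m \<and> k < m \<longrightarrow>
               associator mul (mul (emb a) (tpow mul one t i)) (mul (emb b) (tpow mul one t j))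
                 (mul (emb c) (tpow mul one t k)) = 0"
    and h4a: "d \<noteq> 0" and h4b: "tpow mul one t m = emb d"
    and sigma_def: "\<forall>a. \<sigma> a = (if a = 0 then 0
                        else (SOME a'. a' \<noteq> 0 \<and> mul t (emb a) = mul (emb a') t))"
    and m_pos': "0 < m" and s_m': "\<sigma> ^^ m = id"
begin

abbreviation "tp i \<equiv> tpow mul one t i"

lemma mul_add1: "mul (x + y) z = mul x z + mul y z" using ring by (simp add: unital_nonassoc_ring_def)
lemma mul_add2: "mul x (y + z) = mul x y + mul x z" using ring by (simp add: unital_nonassoc_ring_def)
lemma mul_one1[simp]: "mul one x = x" using ring by (simp add: unital_nonassoc_ring_def)
lemma mul_one2[simp]: "mul x one = x" using ring by (simp add: unital_nonassoc_ring_def)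
lemma mul_01[simp]: "mul 0 x = 0" using mul_add1[of 0 0 x] by simp
lemma mul_02[simp]: "mul x 0 = 0" using mul_add2[of x 0 0] by simp
lemma mul_diff1: "mul (x - y) z = mul x z - mul y z" using mul_add1[of "x - y" y z] by (simp add: algebra_simps)
lemma mul_sum1: "mul (\<Sum>i\<in>A. f i) z = (\<Sum>i\<in>A. mul (f i) z)"
  by (induction A rule: infinite_finite_induct) (simp_all add: mul_add1)
lemma mul_sum2: "mul z (\<Sum>i\<in>A. f i) = (\<Sum>i\<in>A. mul z (f i))"
  by (induction A rule: infinite_finite_induct) (simp_all add: mul_add2)
lemma emb_0[simp]: "emb 0 = 0" using emb_add by (metis add.right_neutral add_left_cancel)
lemma emb_diff: "emb (a - b) = emb a - emb b" using emb_add by (metis diff_add_cancel eq_diff_eq)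

lemma assocX:
  assumes "i + j < m" "k < m" "X = mul (emb a) (tp i)" "Y = mul (emb b) (tp j)" "Z = mul (emb c) (tp k)"
  shows "mul (mul X Y) Z = mul X (mul Y Z)"
  using h3 assms unfolding associator_def by auto

lemma tp1: "tp 1 = t" by simp
lemma t_form: "t = mul (emb 1) (tp 1)" by (simp add: emb_one)
lemma emb_form: "emb a = mul (emb a) (tp 0)" by simp
lemma tp_form: "tp i = mul (emb 1) (tp i)" by (simp add: emb_one)

lemma sig: "mul t (emb a) = mul (emb (\<sigma> a)) t"
proof (cases "a = 0")
  case True thus ?thesis using sigma_def by simp
next
  case False
  hence "\<exists>a'. a' \<noteq> 0 \<and> mul t (emb a) = mul (emb a') t" using h2 by blast
  from someI_ex[OF this] show ?thesis using sigma_def False by simp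
qed

lemma rt_inj: assumes e: "mul (emb x) t = mul (emb y) t" shows "x = y"
proof (cases "m = 1")
  case True
  hence "t = emb d" using h4b by simp
  hence "emb (x * d) = emb (y * d)" using e emb_mult by simp
  hence "x * d = y * d" using emb_inj by (simp add: inj_eq)
  thus ?thesis using h4a by simp
next
  case False
  hence m2: "1 < m" using m_pos' by simp
  define c where "c i = (if i = 1 then x - y else 0)" for i :: nat
  have "(\<Sum>i<m. mul (emb (c i)) (tp i)) = mul (emb (c 1)) (tp 1)"
    by (rule sum_single) (use m2 in \<open>auto simp: c_def\<close>)
  also have "\<dots> = 0" using e by (simp add: c_def emb_diff mul_diff1)
  finally have "c 1 = 0" using h1_indep m2 by blast
  thus ?thesis by (simp add: c_def)
qed

lemma s_add: "\<sigma> (x + y) = \<sigma> x + \<sigma> y"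
proof (rule rt_inj)
  show "mul (emb (\<sigma> (x + y))) t = mul (emb (\<sigma> x + \<sigma> y)) t"
    by (simp add: sig[symmetric] emb_add mul_add1 mul_add2)
qed

lemma s_mult: "\<sigma> (x * y) = \<sigma> x * \<sigma> y"
proof (cases "m = 1")
  case True thus ?thesis using s_m' by simp
next
  case False
  hence m2: "1 < m" using m_pos' by simp
  show ?thesis
  proof (rule rt_inj)
    have "mul (emb (\<sigma> (x * y))) t = mul t (mul (emb x) (emb y))" by (simp add: sig[symmetric] emb_mult)
    also have "\<dots> = mul (mul t (emb x)) (emb y)"
      by (rule assocX[symmetric, where i=1 and j=0 and k=0 and a=1 and b=x and c=y]) (use m2 in \<open>simp_all add: emb_one\<close>)
    also have "\<dots> = mul (mul (emb (\<sigma> x)) t) (emb y)" by (simp add: sig)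
    also have "\<dots> = mul (emb (\<sigma> x)) (mul t (emb y))"
      by (rule assocX[where i=0 and j=1 and k=0 and a="\<sigma> x" and b=1 and c=y]) (use m2 in \<open>simp_all add: emb_one\<close>)
    also have "\<dots> = mul (emb (\<sigma> x)) (mul (emb (\<sigma> y)) t)" by (simp add: sig)
    also have "\<dots> = mul (mul (emb (\<sigma> x)) (emb (\<sigma> y))) t"
      by (rule assocX[symmetric, where i=0 and j=0 and k=1 and a="\<sigma> x" and b="\<sigma> y" and c=1]) (use m2 in \<open>simp_all add: emb_one\<close>)
    finally show "mul (emb (\<sigma> (x * y))) t = mul (emb (\<sigma> x * \<sigma> y)) t" by (simp add: emb_mult)
  qed
qed

sublocale skew \<sigma> d m
  by unfold_locales (simp_all add: s_add s_mult s_m' m_pos' h4a)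

lemma tp_emb: "i < m \<Longrightarrow> mul (tp i) (emb b) = mul (emb ((\<sigma>^^i) b)) (tp i)"
proof (induction i)
  case 0 show ?case by simp
next
  case (Suc i)
  hence i: "Suc i < m" "i < m" by auto
  have "mul (tp (Suc i)) (emb b) = mul (mul t (tp i)) (emb b)" by simp
  also have "\<dots> = mul t (mul (tp i) (emb b))"
    by (rule assocX[where i=1 and j=i and k=0 and a=1 and b=1 and c=b]) (use i in \<open>simp_all add: emb_one\<close>)
  also have "\<dots> = mul t (mul (emb ((\<sigma>^^i) b)) (tp i))" using Suc i by simp
  also have "\<dots> = mul (mul t (emb ((\<sigma>^^i) b))) (tp i)"
    by (rule assocX[symmetric, where i=1 and j=0 and k=i and a=1 and b="(\<sigma>^^i) b" and c=1])
      (use i in \<open>simp_all add: emb_one\<close>)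
  also have "\<dots> = mul (mul (emb ((\<sigma>^^Suc i) b)) t) (tp i)" by (simp add: sig)
  also have "\<dots> = mul (emb ((\<sigma>^^Suc i) b)) (mul t (tp i))"
    by (rule assocX[where i=0 and j=1 and k=i and a="(\<sigma>^^Suc i) b" and b=1 and c=1])
      (use i in \<open>simp_all add: emb_one\<close>)
  finally show ?case by simp
qed

lemma tp_tp: "i < m \<Longrightarrow> j < m \<Longrightarrow> mul (tp i) (tp j) = tp (i + j)"
proof (induction i)
  case 0 show ?case by simp
next
  case (Suc i)
  hence i: "Suc i < m" "i < m" "j < m" by auto
  have "mul (tp (Suc i)) (tp j) = mul (mul t (tp i)) (tp j)" by simp
  also have "\<dots> = mul t (mul (tp i) (tp j))"
    by (rule assocX[where i=1 and j=i and k=j and a=1 and b=1 and c=1]) (use i in \<open>simp_all add: emb_one\<close>)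
  also have "\<dots> = tp (Suc i + j)" using Suc i by simp
  finally show ?case .
qed

lemma tp_over: "r < m \<Longrightarrow> tp (m + r) = mul (emb ((\<sigma>^^r) d)) (tp r)"
proof (induction r)
  case 0 show ?case using h4b by simp
next
  case (Suc r)
  hence r: "Suc r < m" "r < m" by auto
  have "tp (m + Suc r) = mul t (tp (m + r))" by simp
  also have "\<dots> = mul t (mul (emb ((\<sigma>^^r) d)) (tp r))" using Suc r by simp
  also have "\<dots> = mul (mul t (emb ((\<sigma>^^r) d))) (tp r)"
    by (rule assocX[symmetric, where i=1 and j=0 and k=r and a=1 and b="(\<sigma>^^r) d" and c=1])
      (use r in \<open>simp_all add: emb_one\<close>)
  also have "\<dots> = mul (mul (emb ((\<sigma>^^Suc r) d)) t) (tp r)" by (simp add: sig)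
  also have "\<dots> = mul (emb ((\<sigma>^^Suc r) d)) (mul t (tp r))"
    by (rule assocX[where i=0 and j=1 and k=r and a="(\<sigma>^^Suc r) d" and b=1 and c=1])
      (use r in \<open>simp_all add: emb_one\<close>)
  finally show ?case by simp
qed

definition psi :: "'k poly \<Rightarrow> 'a" where
  "psi p = (\<Sum>k<m. mul (emb (coeff p k)) (tp k))"

lemma psi_add: "psi (p + q) = psi p + psi q"
  by (simp add: psi_def emb_add mul_add1 sum.distrib)
lemma psi_zero[simp]: "psi 0 = 0" by (simp add: psi_def)
lemma psi_diff: "psi (p - q) = psi p - psi q"
  using psi_add[of "p - q" q] by (simp add: algebra_simps)
lemma psi_sum: "psi (\<Sum>k\<in>K. g k) = (\<Sum>k\<in>K. psi (g k))"
  by (induction K rule: infinite_finite_induct) (simp_all add: psi_add)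
lemma psi_monom: "k < m \<Longrightarrow> psi (monom c k) = mul (emb c) (tp k)"
  unfolding psi_def by (subst sum_single[of _ k]) (auto simp: coeff_monom)

lemma prod_mt:
  assumes i: "i < m" and j: "j < m"
  shows "mul (mul (emb a) (tp i)) (mul (emb b) (tp j)) = psi (mt a i b j)"
proof -
  have "mul (mul (emb a) (tp i)) (mul (emb b) (tp j)) = mul (mul (mul (emb a) (tp i)) (emb b)) (tp j)"
    by (rule assocX[symmetric, where i=i and j=0 and k=j and a=a and b=b and c=1])
      (use i j in \<open>simp_all add: emb_one\<close>)
  also have "mul (mul (emb a) (tp i)) (emb b) = mul (emb a) (mul (tp i) (emb b))"
    by (rule assocX[where i=0 and j=i and k=0 and a=a and b=1 and c=b]) (use i in \<open>simp_all add: emb_one\<close>)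
  also have "\<dots> = mul (emb a) (mul (emb ((\<sigma>^^i) b)) (tp i))" using i by (simp add: tp_emb)
  also have "\<dots> = mul (mul (emb a) (emb ((\<sigma>^^i) b))) (tp i)"
    by (rule assocX[symmetric, where i=0 and j=0 and k=i and a=a and b="(\<sigma>^^i) b" and c=1])
      (use i in \<open>simp_all add: emb_one\<close>)
  also have "\<dots> = mul (emb (a * (\<sigma>^^i) b)) (tp i)" by (simp add: emb_mult)
  also have "mul (mul (emb (a * (\<sigma>^^i) b)) (tp i)) (tp j) = mul (emb (a * (\<sigma>^^i) b)) (mul (tp i) (tp j))"
    by (rule assocX[where i=0 and j=i and k=j and a="a * (\<sigma>^^i) b" and b=1 and c=1])
      (use i j in \<open>simp_all add: emb_one\<close>)
  also have "\<dots> = mul (emb (a * (\<sigma>^^i) b)) (tp (i + j))" using i j by (simp add: tp_tp)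
  also have "\<dots> = psi (mt a i b j)"
  proof (cases "i + j < m")
    case True thus ?thesis by (simp add: mt_def psi_monom)
  next
    case False
    let ?r = "i + j - m"
    have r: "?r < m" "i + j = m + ?r" using False i j by auto
    have "tp (i + j) = mul (emb ((\<sigma>^^?r) d)) (tp ?r)" using tp_over[OF r(1)] r(2) by simp
    hence "mul (emb (a * (\<sigma>^^i) b)) (tp (i + j))
        = mul (emb (a * (\<sigma>^^i) b)) (mul (emb ((\<sigma>^^?r) d)) (tp ?r))" by simp
    also have "\<dots> = mul (mul (emb (a * (\<sigma>^^i) b)) (emb ((\<sigma>^^?r) d))) (tp ?r)"
      by (rule assocX[symmetric, where i=0 and j=0 and k="?r" and a="a * (\<sigma>^^i) b" and b="(\<sigma>^^?r) d" and c=1])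
        (use r in \<open>simp_all add: emb_one\<close>)
    also have "\<dots> = psi (mt a i b j)"
      using False r by (simp add: mt_def psi_monom emb_mult)
    finally show ?thesis .
  qed
  finally show ?thesis .
qed

lemma psi_pr: "psi (pr p q) = mul (psi p) (psi q)"
  unfolding pr_def psi_sum psi_def[of p] psi_def[of q]
  by (simp only: mul_sum1, simp only: mul_sum2, simp add: prod_mt)

lemma psi_surj: "\<exists>p. degree p < m \<and> psi p = x"
proof -
  obtain c where c: "x = (\<Sum>i<m. mul (emb (c i)) (tp i))" using h1_span by blast
  show ?thesis
    by (rule exI[of _ "\<Sum>i<m. monom (c i) i"]) (simp add: deg_sum_monom psi_def coeff_sum_monom c)
qed

lemma psi_inj: "inj_on psi V"
proof (rule inj_onI)
  fix p q :: "'k poly" assume p: "p \<in> V" and q: "q \<in> V" and e: "psi p = psi q"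
  have "psi (p - q) = 0" using e by (simp add: psi_diff)
  hence "\<forall>i<m. coeff (p - q) i = 0" using h1_indep unfolding psi_def by blast
  thus "p = q" using p q by (intro poly_eq_V) auto
qed

end

theorem theorem4p2:
  fixes mul :: "'a::ab_group_add \<Rightarrow> 'a \<Rightarrow> 'a"
    and one :: 'a
    and emb :: "'k::field \<Rightarrow> 'a"
    and m :: nat
    and t :: 'a
    and d :: 'k
    and \<sigma> :: "'k \<Rightarrow> 'k"
    and F :: "'k set"
  assumes ring: "unital_nonassoc_ring mul one"
    and emb_inj: "inj emb"
    and emb_add: "\<forall>a b. emb (a + b) = emb a + emb b"
    and emb_mult: "\<forall>a b. emb (a * b) = mul (emb a) (emb b)"
    and emb_one: "emb 1 = one"
    and h1_span: "\<forall>x. \<exists>c. x = (\<Sum>i<m. mul (emb (c i)) (tpow mul one t i))"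
    and h1_indep: "\<forall>c. (\<Sum>i<m. mul (emb (c i)) (tpow mul one t i)) = 0 \<longrightarrow> (\<forall>i<m. c i = 0)"
    and h2: "\<forall>a. a \<noteq> 0 \<longrightarrow> (\<exists>a'. a' \<noteq> 0 \<and> mul t (emb a) = mul (emb a') t)"
    and h3: "\<forall>a b c i j k. i + j < m \<and> k < m \<longrightarrow>
               associator mul (mul (emb a) (tpow mul one t i)) (mul (emb b) (tpow mul one t j))
                 (mul (emb c) (tpow mul one t k)) = 0"
    and h4: "d \<noteq> 0" "tpow mul one t m = emb d"
    and sigma_def: "\<forall>a. \<sigma> a = (if a = 0 then 0
                        else (SOME a'. a' \<noteq> 0 \<and> mul t (emb a) = mul (emb a') t))"
    and sigma_order: "0 < m" "\<sigma> ^^ m = id" "\<forall>k. 0 < k \<and> k < m \<longrightarrow> \<sigma> ^^ k \<noteq> id"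
    and F_def: "F = {a. mul t (emb a) = mul (emb a) t}"
    and root: "\<exists>\<omega>\<in>F. \<omega> ^ m = 1 \<and> (\<forall>k. 0 < k \<and> k < m \<longrightarrow> \<omega> ^ k \<noteq> 1)"
    and galois: "finite_cyclic_galois F"
  shows "(\<exists>\<phi>. bij_betw \<phi> UNIV (Sf_carrier (monom 1 m - [:d:])) \<and>
              (\<forall>x y. \<phi> (x + y) = \<phi> x + \<phi> y) \<and>
              (\<forall>x y. \<phi> (mul x y) = Sf_mult \<sigma> (monom 1 m - [:d:]) (\<phi> x) (\<phi> y)))
         \<and> (right_division_ring mul \<longrightarrow>
              skew_irreducible \<sigma> (monom 1 m - [:d:]) \<and>
              nonassoc_cyclic_ext (Sf_carrier (monom 1 m - [:d:]))
                 (Sf_mult \<sigma> (monom 1 m - [:d:])) 1 (range (\<lambda>a. [:a:])) m)"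
proof -
  interpret S: Sctx mul one emb m t d \<sigma>
    by (unfold_locales; (rule ring emb_inj emb_add emb_mult emb_one h1_span h1_indep h2 h3 h4 sigma_def sigma_order(1,2))?)
  let ?V = "{p::'k poly. degree p < m}"
  let ?f = "monom 1 m - [:d:]"
  have A: "Sf_carrier ?f = ?V" by (rule S.carrier_V)
  have im: "x \<in> S.psi ` ?V" for x using S.psi_surj[of x] by blast
  have bpsi: "bij_betw S.psi ?V UNIV"
    unfolding bij_betw_def using S.psi_inj im by auto
  define \<phi> where "\<phi> = the_inv_into ?V S.psi"
  have phiV: "\<phi> x \<in> ?V" for x
    unfolding \<phi>_def using the_inv_into_into[OF S.psi_inj im, of ?V] by auto
  have psiphi: "S.psi (\<phi> x) = x" for x
    unfolding \<phi>_def using f_the_inv_into_f[OF S.psi_inj im] by auto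
  have phipsi: "p \<in> ?V \<Longrightarrow> \<phi> (S.psi p) = p" for p
    unfolding \<phi>_def using the_inv_into_f_f[OF S.psi_inj] by auto
  have part1: "\<exists>\<phi>. bij_betw \<phi> UNIV (Sf_carrier ?f) \<and>
              (\<forall>x y. \<phi> (x + y) = \<phi> x + \<phi> y) \<and>
              (\<forall>x y. \<phi> (mul x y) = Sf_mult \<sigma> ?f (\<phi> x) (\<phi> y))"
  proof (rule exI[of _ \<phi>], intro conjI allI)
    show "bij_betw \<phi> UNIV (Sf_carrier ?f)" unfolding A \<phi>_def
      by (rule bij_betw_the_inv_into[OF bpsi])
  next
    fix x y
    have "\<phi> (x + y) = \<phi> (S.psi (\<phi> x + \<phi> y))" by (simp add: S.psi_add psiphi)
    also have "\<dots> = \<phi> x + \<phi> y" using phiV S.V_add by (intro phipsi) auto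
    finally show "\<phi> (x + y) = \<phi> x + \<phi> y" .
    have "\<phi> (mul x y) = \<phi> (S.psi (S.pr (\<phi> x) (\<phi> y)))" by (simp add: S.psi_pr psiphi)
    also have "\<dots> = S.pr (\<phi> x) (\<phi> y)" using S.pr_deg by (intro phipsi) auto
    also have "\<dots> = Sf_mult \<sigma> ?f (\<phi> x) (\<phi> y)" using phiV S.Sf_mult_pr by simp
    finally show "\<phi> (mul x y) = Sf_mult \<sigma> ?f (\<phi> x) (\<phi> y)" .
  qed
  have part2: "skew_irreducible \<sigma> ?f \<and>
              nonassoc_cyclic_ext (Sf_carrier ?f) (Sf_mult \<sigma> ?f) 1 (range (\<lambda>a. [:a:])) m"
    if rd: "right_division_ring mul"
  proof -
    have RD: "bij_betw (\<lambda>x. S.pr x h) ?V ?V" if h: "degree h < m" "h \<noteq> 0" for h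
    proof -
      have "S.psi h \<noteq> 0" using h S.psi_inj S.m_pos
        by (metis (mono_tags) S.psi_zero degree_0 inj_onD mem_Collect_eq)
      hence bR: "bij (\<lambda>x. mul x (S.psi h))" using rd by (simp add: right_division_ring_def)
      have inj: "inj_on (\<lambda>x. S.pr x h) ?V"
      proof (rule inj_onI)
        fix x y assume x: "x \<in> ?V" and y: "y \<in> ?V" and e: "S.pr x h = S.pr y h"
        hence "mul (S.psi x) (S.psi h) = mul (S.psi y) (S.psi h)" by (simp add: S.psi_pr[symmetric])
        hence "S.psi x = S.psi y" using bR by (auto simp: bij_def dest: injD)
        thus "x = y" using S.psi_inj x y by (auto dest: inj_onD)
      qed
      have "(\<lambda>x. S.pr x h) ` ?V = ?V"
      proof
        show "(\<lambda>x. S.pr x h) ` ?V \<subseteq> ?V" using S.pr_deg by auto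
        show "?V \<subseteq> (\<lambda>x. S.pr x h) ` ?V"
        proof
          fix y :: "'k poly" assume y: "y \<in> ?V"
          obtain z where z: "mul z (S.psi h) = S.psi y" using bR by (metis bij_pointE)
          obtain x where x: "degree x < m" "S.psi x = z" using S.psi_surj by blast
          have "S.psi (S.pr x h) = S.psi y" using x z by (simp add: S.psi_pr)
          hence "S.pr x h = y" using S.psi_inj y S.pr_deg by (auto dest: inj_onD)
          thus "y \<in> (\<lambda>x. S.pr x h) ` ?V" using x by auto
        qed
      qed
      thus ?thesis using inj by (simp add: bij_betw_def)
    qed
    have irr: "skew_irreducible \<sigma> ?f"
      by (rule S.irred) (use RD in \<open>simp add: bij_betw_def\<close>)
    obtain w where w: "w \<in> F" "w ^ m = 1" "\<forall>k. 0 < k \<and> k < m \<longrightarrow> w ^ k \<noteq> 1"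
      using root by blast
    have sw: "\<sigma> w = w"
    proof (rule S.rt_inj)
      show "mul (emb (\<sigma> w)) t = mul (emb w) t" using w(1) F_def S.sig by simp
    qed
    have "nonassoc_cyclic_ext (Sf_carrier ?f) (Sf_mult \<sigma> ?f) 1 (range (\<lambda>a. [:a:])) m"
      by (rule S.cyc[OF _ sw w(2,3)]) (use RD in auto)
    thus ?thesis using irr by simp
  qed
  show ?thesis using part1 part2 by blast
qed

end
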